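(* Let $\emptyset\neq S\subseteq\mathbb{S}$. The following assertions are equivalent: (i) $S$ is closed and s-convex; (ii) $\mathbb{R}_+S$ is a pointed, closed, convex cone; (iii) there exists a pointed, closed, convex cone $K\subseteq\mathbb{R}^n$ such that $S=K\cap\mathbb{S}$; (iv) $S=\rho(\overline{\operatorname{conv}}\,S)$; (v) there exists a compact convex set $C\subseteq\mathbb{R}^n$ such that $S=\rho(C)$.
   Context: Standing setting: $n\ge 2$; $\mathbb{R}^n$ carries the usual inner product $\langle\cdot,\cdot\rangle$ and Euclidean norm; $o$ denotes the zero vector. $\Phi:\mathbb{R}^n\to\mathbb{R}_+:=[0,\infty)$ is a continuous function with $\Phi(tx)=t\Phi(x)$ for all $x\in\mathbb{R}^n$, $t\ge 0$, and $\Phi(x)=0$ iff $x=o$. Set $\mathbb{S}:=\{x\in\mathbb{R}^n\mid \Phi(x)=1\}$ (with the topology induced from $\mathbb{R}^n$), $\mathbb{P}:=(0,\infty)$, and $\rho:\mathbb{R}^n\to\{o\}\cup\mathbb{S}$, $\rho(x):=x/\Phi(x)$ for $x\neq o$, $\rho(o):=o$. For $\emptyset\ne\Gamma\subseteq\mathbb{R}$ and $\emptyset\ne A\subseteq\mathbb{R}^n$, $\Gamma A:=\{\gamma a\mid \gamma\in\Gamma,\ a\in A\}$. For $x,y\in\mathbb{S}$ and $\lambda\in[0,1]$, $\lambda x+_s(1-\lambda)y:=\rho(\lambda x+(1-\lambda)y)$. A nonempty set $S\subseteq\mathbb{S}$ is called s-convex if $\lambda x+_s(1-\lambda)y\in S$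 for all $x,y\in S$ and $\lambda\in[0,1]$. A cone $K\subseteq\mathbb{R}^n$ is pointed if $K\cap(-K)=\{o\}$. $\operatorname{conv}$ denotes the convex hull and $\overline{\operatorname{conv}}$ the closed convex hull. *)

theory Defs
  imports "HOL-Analysis.Analysis"
begin

definition sph :: "('a::real_normed_vector \<Rightarrow> real) \<Rightarrow> 'a set" where
  "sph \<Phi> = {x. \<Phi> x = 1}"

definition rho :: "('a::real_normed_vector \<Rightarrow> real) \<Rightarrow> 'a \<Rightarrow> 'a" where
  "rho \<Phi> x = (if x = 0 then 0 else x /\<^sub>R \<Phi> x)"

definition s_comb :: "('a::real_normed_vector \<Rightarrow> real) \<Rightarrow> real \<Rightarrow> 'a \<Rightarrow> 'a \<Rightarrow> 'a" where
  "s_comb \<Phi> l x y = rho \<Phi> (l *\<^sub>R x + (1 - l) *\<^sub>R y)"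

definition s_convex :: "('a::real_normed_vector \<Rightarrow> real) \<Rightarrow> 'a set \<Rightarrow> bool" where
  "s_convex \<Phi> S \<longleftrightarrow> S \<noteq> {} \<and> S \<subseteq> sph \<Phi> \<and>
     (\<forall>x\<in>S. \<forall>y\<in>S. \<forall>l\<in>{0..1}. s_comb \<Phi> l x y \<in> S)"

definition set_scale :: "real set \<Rightarrow> 'a::real_vector set \<Rightarrow> 'a set" where
  "set_scale \<Gamma> A = {\<gamma> *\<^sub>R a | \<gamma> a. \<gamma> \<in> \<Gamma> \<and> a \<in> A}"

definition pointed :: "'a::real_vector set \<Rightarrow> bool" where
  "pointed K \<longleftrightarrow> K \<inter> uminus ` K = {0}"

end

theory Submission
  imports Defs
begin

locale gauge =
  fixes \<Phi> :: "'a::euclidean_space \<Rightarrow> real"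
  assumes cont: "continuous_on UNIV \<Phi>"
    and nonneg: "\<And>x. \<Phi> x \<ge> 0"
    and hom: "\<And>x t. t \<ge> 0 \<Longrightarrow> \<Phi> (t *\<^sub>R x) = t * \<Phi> x"
    and zero: "\<And>x. \<Phi> x = 0 \<longleftrightarrow> x = 0"
begin

lemma phi0[simp]: "\<Phi> 0 = 0" using zero by simp

lemma pos: "x \<noteq> 0 \<Longrightarrow> \<Phi> x > 0"
  using nonneg[of x] zero[of x] by linarith

lemma rho_nz: "x \<noteq> 0 \<Longrightarrow> rho \<Phi> x = (1 / \<Phi> x) *\<^sub>R x"
  by (simp add: rho_def divide_inverse_commute)

lemma rho_sph: "x \<noteq> 0 \<Longrightarrow> rho \<Phi> x \<in> sph \<Phi>"
  using pos[of x] by (simp add: rho_nz sph_def hom)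

lemma zero_notin: "0 \<notin> sph \<Phi>"
  by (simp add: sph_def)

lemma rho_id: "x \<in> sph \<Phi> \<Longrightarrow> rho \<Phi> x = x"
  using zero_notin by (auto simp: rho_def sph_def)

lemma rho_scale: "c > 0 \<Longrightarrow> rho \<Phi> (c *\<^sub>R x) = rho \<Phi> x"
  by (cases "x = 0") (auto simp: rho_def hom)

lemma decomp: "x = \<Phi> x *\<^sub>R rho \<Phi> x"
  using pos[of x] by (cases "x = 0") (auto simp: rho_nz rho_def)

lemma closed_sph: "closed (sph \<Phi>)"
proof -
  have "closed {x. \<Phi> x = 1}"
    by (rule closed_Collect_eq) (use cont continuous_on_const in auto)
  then show ?thesis by (simp add: sph_def)
qed

lemma bounded_sph: "bounded (sph \<Phi>)"
proof -
  obtain u where u: "u \<in> sphere (0::'a) 1" "\<And>y. y \<in> sphere 0 1 \<Longrightarrow> \<Phi> u \<le> \<Phi> y"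
  proof -
    have ne: "sphere (0::'a) 1 \<noteq> {}" by simp
    show ?thesis using continuous_attains_inf[OF compact_sphere ne continuous_on_subset[OF cont subset_UNIV]] that
      by blast
  qed
  define m where "m = \<Phi> u"
  have "u \<noteq> 0" using u(1) by auto
  then have m: "m > 0" using pos by (auto simp: m_def)
  have "norm x \<le> 1 / m" if "x \<in> sph \<Phi>" for x
  proof -
    have x0: "x \<noteq> 0" using that zero_notin by auto
    have "(1 / norm x) *\<^sub>R x \<in> sphere 0 1" using x0 by simp
    then have "m \<le> \<Phi> ((1 / norm x) *\<^sub>R x)" using u(2) m_def by blast
    also have "\<dots> = 1 / norm x" using that by (simp add: hom sph_def)
    finally show ?thesis using m x0 by (simp add: field_simps)
  qed
  then show ?thesis unfolding bounded_iff by blast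
qed

lemma compact_sph: "compact (sph \<Phi>)"
  using closed_sph bounded_sph by (simp add: compact_eq_bounded_closed)


lemma conic_eq: "set_scale {0..} S = conic hull S"
  unfolding set_scale_def conic_hull_explicit by auto

lemma i_ii:
  assumes cl: "closedin (top_of_set (sph \<Phi>)) S" and sc: "s_convex \<Phi> S"
  shows "cone (conic hull S) \<and> pointed (conic hull S) \<and> closed (conic hull S) \<and> convex (conic hull S)"
proof -
  have ne: "S \<noteq> {}" and sub: "S \<subseteq> sph \<Phi>"
    and comb: "\<And>x y l. x \<in> S \<Longrightarrow> y \<in> S \<Longrightarrow> l \<in> {0..1} \<Longrightarrow> s_comb \<Phi> l x y \<in> S"
    using sc by (auto simp: s_convex_def)
  have nz: "l *\<^sub>R x + (1 - l) *\<^sub>R y \<noteq> 0" if "x \<in> S" "y \<in> S" "0 \<le> l" "l \<le> 1" for x y l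
  proof
    assume "l *\<^sub>R x + (1 - l) *\<^sub>R y = 0"
    then have "rho \<Phi> 0 \<in> S" using comb[of x y l] that by (simp add: s_comb_def)
    then show False using sub zero_notin by (auto simp: rho_def)
  qed
  have K: "conic hull S = {c *\<^sub>R x| c x. 0 \<le> c \<and> x \<in> S}" by (rule conic_hull_explicit)
  have cone: "cone (conic hull S)"
    unfolding cone_def by (metis conic_conic_hull conicD)
  have Sc: "closed S" using cl closed_sph closedin_closed_trans by blast
  have "sph \<Phi> \<inter> S = S" using sub by auto
  then have "compact S" using compact_Int_closed[OF compact_sph Sc] by simp
  moreover have "0 \<notin> S" using sub zero_notin by auto
  ultimately have closed: "closed (conic hull S)" using closed_conic_hull by blast
  have key: "p *\<^sub>R x + q *\<^sub>R y \<in> conic hull S" if "x \<in> S" "y \<in> S" "p \<ge> 0" "q \<ge> 0" for x y p q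
  proof (cases "p + q = 0")
    case True
    then have "p = 0" "q = 0" using that by auto
    then show ?thesis using K that by force
  next
    case False
    then have pq: "p + q > 0" using that by auto
    define z where "z = (p / (p + q)) *\<^sub>R x + (1 - p / (p + q)) *\<^sub>R y"
    have z0: "z \<noteq> 0" unfolding z_def by (rule nz[OF that(1,2)]) (use pq that in \<open>auto simp: field_simps\<close>)
    have rz: "rho \<Phi> z \<in> S" using comb[OF that(1,2), of "p / (p + q)"] pq that
      by (simp add: s_comb_def z_def field_simps)
    have e1: "(p + q) * (p / (p + q)) = p" using pq by simp
    have e2: "(p + q) * (1 - p / (p + q)) = q" using pq by (simp add: field_simps)
    have "p *\<^sub>R x + q *\<^sub>R y = (p + q) *\<^sub>R z"
      unfolding z_def scaleR_add_right scaleR_scaleR e1 e2 ..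
    also have "\<dots> = ((p + q) * \<Phi> z) *\<^sub>R rho \<Phi> z" using decomp[of z] by (metis scaleR_scaleR)
    finally have eq: "p *\<^sub>R x + q *\<^sub>R y = ((p + q) * \<Phi> z) *\<^sub>R rho \<Phi> z" .
    have "(p + q) * \<Phi> z \<ge> 0" using pq nonneg[of z] by simp
    then show ?thesis unfolding K using eq rz by blast
  qed
  have convex: "convex (conic hull S)"
  proof (rule convexI)
    fix a b and u v :: real assume a: "a \<in> conic hull S" and b: "b \<in> conic hull S" and uv: "0 \<le> u" "0 \<le> v" "u + v = 1"
    obtain c x where a': "a = c *\<^sub>R x" "c \<ge> 0" "x \<in> S" using a K by auto
    obtain d y where b': "b = d *\<^sub>R y" "d \<ge> 0" "y \<in> S" using b K by auto
    have "u *\<^sub>R a + v *\<^sub>R b = (u * c) *\<^sub>R x + (v * d) *\<^sub>R y" using a' b' by simp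
    then show "u *\<^sub>R a + v *\<^sub>R b \<in> conic hull S" using key[OF a'(3) b'(3)] a' b' uv by simp
  qed
  have pointed: "pointed (conic hull S)"
    unfolding pointed_def
  proof
    show "conic hull S \<inter> uminus ` (conic hull S) \<subseteq> {0}"
    proof
      fix w assume w: "w \<in> conic hull S \<inter> uminus ` (conic hull S)"
      obtain c x where a': "w = c *\<^sub>R x" "c \<ge> 0" "x \<in> S" using w K by auto
      obtain d y where b': "- w = d *\<^sub>R y" "d \<ge> 0" "y \<in> S" using w K by force
      show "w \<in> {0}"
      proof (rule ccontr)
        assume "w \<notin> {0}"
        then have c: "c > 0" using a' by auto
        have sum: "c *\<^sub>R x + d *\<^sub>R y = 0" using a' b' by (metis add.right_inverse)
        have "(c / (c + d)) *\<^sub>R x + (1 - c / (c + d)) *\<^sub>R y = (1 / (c + d)) *\<^sub>R (c *\<^sub>R x + d *\<^sub>R y)"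
          using c b'(2) by (simp add: field_simps algebra_simps)
        also have "\<dots> = 0" using sum by simp
        finally show False using nz[OF a'(3) b'(3), of "c / (c + d)"] c b'(2) by simp
      qed
    qed
  next
    obtain x where "x \<in> S" using ne by auto
    then have "0 \<in> conic hull S" using K by (metis (mono_tags, lifting) mem_Collect_eq order_refl scale_zero_left)
    then show "{0} \<subseteq> conic hull S \<inter> uminus ` (conic hull S)" by force
  qed
  show ?thesis using cone pointed closed convex by blast
qed


lemma ii_iii:
  assumes sub: "S \<subseteq> sph \<Phi>"
  shows "S = conic hull S \<inter> sph \<Phi>"
proof
  show "S \<subseteq> conic hull S \<inter> sph \<Phi>" using sub hull_inc[of _ S conic] by blast
  show "conic hull S \<inter> sph \<Phi> \<subseteq> S"
  proof
    fix w assume w: "w \<in> conic hull S \<inter> sph \<Phi>"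
    obtain c x where a': "w = c *\<^sub>R x" "c \<ge> 0" "x \<in> S" using w conic_hull_explicit[of S] by auto
    have "1 = \<Phi> w" using w by (simp add: sph_def)
    also have "\<dots> = c" using a' sub hom by (auto simp: sph_def)
    finally show "w \<in> S" using a' by simp
  qed
qed

lemma iii_iv:
  assumes K: "cone K" "pointed K" "closed K" "convex K" and S: "S = K \<inter> sph \<Phi>"
  shows "S = rho \<Phi> ` closure (convex hull S)"
proof -
  have "compact S" unfolding S using compact_Int_closed[OF compact_sph K(3)] by (simp add: Int_commute)
  then have cc: "closure (convex hull S) = convex hull S"
    by (rule closure_closed[OF compact_imp_closed[OF compact_convex_hull]])
  have cvx: "convex (K - {0})"
  proof (rule convexI)
    fix x y and u v :: real assume x: "x \<in> K - {0}" and y: "y \<in> K - {0}" and uv: "0 \<le> u" "0 \<le> v" "u + v = 1"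
    have "u *\<^sub>R x + v *\<^sub>R y \<in> K" using convexD[OF K(4)] x y uv by blast
    moreover have "u *\<^sub>R x + v *\<^sub>R y \<noteq> 0"
    proof
      assume h: "u *\<^sub>R x + v *\<^sub>R y = 0"
      show False
      proof (cases "u = 0")
        case True
        then show False using h uv y by simp
      next
        case False
        have ux: "u *\<^sub>R x \<in> K" using K(1) x uv by (simp add: cone_def)
        have "v *\<^sub>R y \<in> K" using K(1) y uv by (simp add: cone_def)
        moreover have "u *\<^sub>R x = - (v *\<^sub>R y)" using h by (simp add: eq_neg_iff_add_eq_0)
        ultimately have "u *\<^sub>R x \<in> K \<inter> uminus ` K" using ux by blast
        then have "u *\<^sub>R x = 0" using K(2) unfolding pointed_def by blast
        then show False using False x by simp
      qed
    qed
    ultimately show "u *\<^sub>R x + v *\<^sub>R y \<in> K - {0}" by blast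
  qed
  have "S \<subseteq> K - {0}" using S zero_notin by auto
  then have hK: "convex hull S \<subseteq> K - {0}" using cvx by (simp add: hull_minimal)
  show ?thesis unfolding cc
  proof
    show "S \<subseteq> rho \<Phi> ` (convex hull S)"
    proof
      fix x assume x: "x \<in> S"
      then have "rho \<Phi> x = x" using rho_id S by simp
      moreover have "x \<in> convex hull S" using x by (rule hull_inc)
      ultimately show "x \<in> rho \<Phi> ` (convex hull S)" by (metis image_eqI)
    qed
    show "rho \<Phi> ` (convex hull S) \<subseteq> S"
    proof
      fix w assume "w \<in> rho \<Phi> ` (convex hull S)"
      then obtain z where z: "z \<in> convex hull S" "w = rho \<Phi> z" by auto
      then have zK: "z \<in> K" "z \<noteq> 0" using hK by auto
      have "w = (1 / \<Phi> z) *\<^sub>R z" using z zK rho_nz by simp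
      then have "w \<in> K" using K(1) zK nonneg[of z] by (simp add: cone_def)
      moreover have "w \<in> sph \<Phi>" using rho_sph zK z by simp
      ultimately show "w \<in> S" using S by simp
    qed
  qed
qed

lemma iv_v:
  assumes sub: "S \<subseteq> sph \<Phi>" and eq: "S = rho \<Phi> ` closure (convex hull S)"
  shows "\<exists>C. compact C \<and> convex C \<and> S = rho \<Phi> ` C"
proof (intro exI conjI)
  have "bounded S" using bounded_sph sub bounded_subset by blast
  then show "compact (closure (convex hull S))"
    using bounded_convex_hull compact_closure by blast
  show "convex (closure (convex hull S))" by (simp add: convex_closure)
qed (rule eq)

lemma v_i:
  assumes sub: "S \<subseteq> sph \<Phi>" and ne: "S \<noteq> {}" and C: "compact C" "convex C" "S = rho \<Phi> ` C"
  shows "closedin (top_of_set (sph \<Phi>)) S \<and> s_convex \<Phi> S"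
proof
  have C0: "0 \<notin> C"
  proof
    assume "0 \<in> C"
    then have "0 \<in> S" using C(3) by (force simp: rho_def)
    then show False using sub zero_notin by auto
  qed
  have "continuous_on C (\<lambda>x. inverse (\<Phi> x) *\<^sub>R x)"
    by (intro continuous_intros continuous_on_subset[OF cont]) (use C0 zero in auto)
  moreover have "\<And>x. x \<in> C \<Longrightarrow> rho \<Phi> x = inverse (\<Phi> x) *\<^sub>R x" using C0 by (auto simp: rho_def)
  ultimately have "continuous_on C (rho \<Phi>)" using continuous_on_cong by force
  then have "compact S" using C compact_continuous_image by blast
  then show "closedin (top_of_set (sph \<Phi>)) S" using sub by (simp add: closed_subset compact_imp_closed)
  show "s_convex \<Phi> S" unfolding s_convex_def
  proof (intro conjI ballI)
    fix x y l assume x: "x \<in> S" and y: "y \<in> S" and l: "l \<in> {0..(1::real)}"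
    obtain c1 where c1: "c1 \<in> C" "x = rho \<Phi> c1" using x C(3) by auto
    obtain c2 where c2: "c2 \<in> C" "y = rho \<Phi> c2" using y C(3) by auto
    have nz12: "c1 \<noteq> 0" "c2 \<noteq> 0" using c1 c2 C0 by auto
    then have p1: "\<Phi> c1 > 0" "\<Phi> c2 > 0" using pos by auto
    define a where "a = l / \<Phi> c1"
    define b where "b = (1 - l) / \<Phi> c2"
    have ab1: "a \<ge> 0" "b \<ge> 0"
      using l p1 unfolding a_def b_def by auto
    have "a + b > 0"
    proof (cases "l = 0")
      case True
      then show ?thesis using p1 by (simp add: a_def b_def)
    next
      case False
      then have "a > 0" using l p1 by (simp add: a_def)
      then show ?thesis using ab1 by linarith
    qed
    note ab = ab1 this
    define c where "c = (a / (a + b)) *\<^sub>R c1 + (b / (a + b)) *\<^sub>R c2"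
    have cC: "c \<in> C" unfolding c_def using convexD[OF C(2) c1(1) c2(1)] ab by (simp add: add_divide_distrib[symmetric])
    have "l *\<^sub>R x + (1 - l) *\<^sub>R y = a *\<^sub>R c1 + b *\<^sub>R c2"
      using c1 c2 nz12 by (simp add: rho_nz a_def b_def)
    also have "\<dots> = (a + b) *\<^sub>R c" using ab by (simp add: c_def scaleR_add_right)
    finally have "s_comb \<Phi> l x y = rho \<Phi> c"
      using ab rho_scale by (simp add: s_comb_def)
    then show "s_comb \<Phi> l x y \<in> S" using cC C(3) by simp
  qed (use ne sub in auto)
qed

end

theorem corollary1:
  fixes \<Phi> :: "'a::euclidean_space \<Rightarrow> real" and S :: "'a set"
  assumes dim: "DIM('a) \<ge> 2"
    and cont: "continuous_on UNIV \<Phi>"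
    and nonneg: "\<And>x. \<Phi> x \<ge> 0"
    and hom: "\<And>x t. t \<ge> 0 \<Longrightarrow> \<Phi> (t *\<^sub>R x) = t * \<Phi> x"
    and zero: "\<And>x. \<Phi> x = 0 \<longleftrightarrow> x = 0"
    and ne: "S \<noteq> {}"
    and sub: "S \<subseteq> sph \<Phi>"
  shows
   "((closedin (top_of_set (sph \<Phi>)) S \<and> s_convex \<Phi> S)
       \<longleftrightarrow> (let K = set_scale {0..} S in cone K \<and> pointed K \<and> closed K \<and> convex K))
  \<and> ((let K = set_scale {0..} S in cone K \<and> pointed K \<and> closed K \<and> convex K)
       \<longleftrightarrow> (\<exists>K. cone K \<and> pointed K \<and> closed K \<and> convex K \<and> S = K \<inter> sph \<Phi>))
  \<and> ((\<exists>K. cone K \<and> pointed K \<and> closed K \<and> convex K \<and> S = K \<inter> sph \<Phi>)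
       \<longleftrightarrow> S = rho \<Phi> ` closure (convex hull S))
  \<and> (S = rho \<Phi> ` closure (convex hull S)
       \<longleftrightarrow> (\<exists>C. compact C \<and> convex C \<and> S = rho \<Phi> ` C))"
proof -
  interpret gauge \<Phi> using cont nonneg hom zero by unfold_locales auto
  define P1 where "P1 = (closedin (top_of_set (sph \<Phi>)) S \<and> s_convex \<Phi> S)"
  define P2 where "P2 = (cone (conic hull S) \<and> pointed (conic hull S) \<and> closed (conic hull S) \<and> convex (conic hull S))"
  define P3 where "P3 = (\<exists>K. cone K \<and> pointed K \<and> closed K \<and> convex K \<and> S = K \<inter> sph \<Phi>)"
  define P4 where "P4 = (S = rho \<Phi> ` closure (convex hull S))"
  define P5 where "P5 = (\<exists>C. compact C \<and> convex C \<and> S = rho \<Phi> ` C)"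
  have 12: "P1 \<Longrightarrow> P2" unfolding P1_def P2_def using i_ii by blast
  have 23: "P2 \<Longrightarrow> P3" unfolding P2_def P3_def using ii_iii[OF sub] by blast
  have 34: "P3 \<Longrightarrow> P4" unfolding P3_def P4_def using iii_iv by blast
  have 45: "P4 \<Longrightarrow> P5" unfolding P4_def P5_def using iv_v[OF sub] by blast
  have 51: "P5 \<Longrightarrow> P1" unfolding P5_def P1_def using v_i[OF sub ne] by blast
  have "(P1 \<longleftrightarrow> P2) \<and> (P2 \<longleftrightarrow> P3) \<and> (P3 \<longleftrightarrow> P4) \<and> (P4 \<longleftrightarrow> P5)"
    using 12 23 34 45 51 by blast
  then show ?thesis unfolding Let_def conic_eq P1_def P2_def P3_def P4_def P5_def .
qed

end
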